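(* Let $k\ge4$ be an integer, let $(\mathcal X,\mathcal F,t)$ be an instance of SET-COVER, and let $\mathbb G$ be the graph constructed from it as described in the context. If $E'$ is a good $k$-completion set of $\mathbb G$, then $\{S_j\in\mathcal F: (S_j,S'_j)\in E'\}$ is a set cover of $\mathcal X$ of size $|E'|$.
   Context: SET-COVER instance $(\mathcal X,\mathcal F,t)$: a finite set $\mathcal X$ of items, a family $\mathcal F$ of nonempty subsets of $\mathcal X$ such that every item lies in some set of $\mathcal F$, and an integer $t$; a set cover is a subfamily of $\mathcal F$ whose union is $\mathcal X$. For $k\ge4$ the graph $\mathbb G$ is built as follows: (1) for each item $x_i\in\mathcal X$ add vertices $x_i,x'_i$ and the item edge $(x_i,x'_i)$; (2) for each set $S_j\in\mathcal F$ add a set subgraph $\mathbb G_j$ isomorphic to $K_{k-2}$ minus one edge, whose missing edge is between vertices named $S_j$ and $S'_j$; (3) for each $x_i\in\mathcal X$ and $S_j\in\mathcal F$ with $x_i\in S_j$, join both $x_i$ and $x'_i$ to every vertex of $\mathbb G_j$; (4) for each edge of the graph obtained so far other than the item edges, add $k-2$ new vertices forming a $k$-clique together with the endpoints of that edge; (5) add a vertex $P$, add the edge $(S_j,P)$ for every $S_j\in\mathcal F$, and for each such edge add $k-2$ new vertices forming a $k$-clique with $S_j$ and $P$. A connected graph has a $(k,1)$-cover if each edge lies in a clique of order $k$; a $k$-completion set of $\mathbb G$ is a set $E'$ of non-edges of $\mathbb G$ such that $\mathbb G\cup E'$ has a $(k,1)$-cover; it is good if $E'\subseteq\{(S_j,S'_j):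 S_j\in\mathcal F\}$. *)

theory Defs
  imports Main
begin

text \<open>Base vertices (steps 1, 2, 3 and the vertex P of step 5):
  Itm x = x_i, Itm' x = x'_i, SV S i = the i-th vertex (i < k-2) of the set subgraph G_j
  of the set S = S_j (with SV S 0 = S_j and SV S 1 = S'_j the endpoints of the
  missing edge), PV = P.\<close>
datatype 'a bvtx = Itm 'a | Itm' 'a | SV "'a set" nat | PV

text \<open>All vertices: base vertices, and the k-2 new vertices Ext e i (i < k-2) added for
  the edge e (steps 4 and 5).\<close>
datatype 'a vtx = B "'a bvtx" | Ext "'a bvtx set" nat

definition item_edges :: "'a set \<Rightarrow> 'a bvtx set set" where
  "item_edges X = {{Itm x, Itm' x} | x. x \<in> X}"

definition set_edges :: "nat \<Rightarrow> 'a set set \<Rightarrow> 'a bvtx set set" where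
  "set_edges k F = {{SV S i, SV S j} | S i j. S \<in> F \<and> i < k - 2 \<and> j < k - 2 \<and> i \<noteq> j
                      \<and> {i, j} \<noteq> {0, 1}}"

definition incidence_edges :: "nat \<Rightarrow> 'a set set \<Rightarrow> 'a bvtx set set" where
  "incidence_edges k F =
     {{Itm x, SV S i} | x S i. S \<in> F \<and> x \<in> S \<and> i < k - 2}
   \<union> {{Itm' x, SV S i} | x S i. S \<in> F \<and> x \<in> S \<and> i < k - 2}"

definition base_edges :: "nat \<Rightarrow> 'a set \<Rightarrow> 'a set set \<Rightarrow> 'a bvtx set set" where
  "base_edges k X F = item_edges X \<union> set_edges k F \<union> incidence_edges k F"

definition P_edges :: "'a set set \<Rightarrow> 'a bvtx set set" where
  "P_edges F = {{SV S 0, PV} | S. S \<in> F}"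

definition gadget_edges :: "nat \<Rightarrow> 'a bvtx set \<Rightarrow> 'a vtx set set" where
  "gadget_edges k e =
     {{u, v} | u v. u \<noteq> v \<and> u \<in> B ` e \<union> {Ext e i | i. i < k - 2}
                          \<and> v \<in> B ` e \<union> {Ext e i | i. i < k - 2}}"

definition G_edges :: "nat \<Rightarrow> 'a set \<Rightarrow> 'a set set \<Rightarrow> 'a vtx set set" where
  "G_edges k X F =
     (image B ` item_edges X)
   \<union> (\<Union>e \<in> (base_edges k X F - item_edges X) \<union> P_edges F. gadget_edges k e)"

definition G_vertices :: "nat \<Rightarrow> 'a set \<Rightarrow> 'a set set \<Rightarrow> 'a vtx set" where
  "G_vertices k X F = \<Union> (G_edges k X F) \<union> {B PV}"

definition is_clique :: "'v set set \<Rightarrow> 'v set \<Rightarrow> bool" where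
  "is_clique E K \<longleftrightarrow> (\<forall>u\<in>K. \<forall>v\<in>K. u \<noteq> v \<longrightarrow> {u, v} \<in> E)"

definition has_k1_cover :: "nat \<Rightarrow> 'v set set \<Rightarrow> bool" where
  "has_k1_cover k E \<longleftrightarrow>
     (\<forall>e\<in>E. \<exists>K. e \<subseteq> K \<and> finite K \<and> card K = k \<and> is_clique E K)"

definition k_completion_set :: "nat \<Rightarrow> 'a set \<Rightarrow> 'a set set \<Rightarrow> 'a vtx set set \<Rightarrow> bool" where
  "k_completion_set k X F E' \<longleftrightarrow>
     (\<forall>e\<in>E'. e \<notin> G_edges k X F \<and>
        (\<exists>u v. u \<noteq> v \<and> e = {u, v} \<and> u \<in> G_vertices k X F \<and> v \<in> G_vertices k X F))
     \<and> has_k1_cover k (G_edges k X F \<union> E')"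

definition good_completion_set :: "nat \<Rightarrow> 'a set \<Rightarrow> 'a set set \<Rightarrow> 'a vtx set set \<Rightarrow> bool" where
  "good_completion_set k X F E' \<longleftrightarrow>
     k_completion_set k X F E' \<and> E' \<subseteq> {{B (SV S 0), B (SV S 1)} | S. S \<in> F}"

definition set_cover_instance :: "'a set \<Rightarrow> 'a set set \<Rightarrow> bool" where
  "set_cover_instance X F \<longleftrightarrow> finite X \<and> (\<forall>S\<in>F. S \<noteq> {} \<and> S \<subseteq> X) \<and> \<Union> F = X"

definition is_set_cover :: "'a set \<Rightarrow> 'a set set \<Rightarrow> 'a set set \<Rightarrow> bool" where
  "is_set_cover X F C \<longleftrightarrow> C \<subseteq> F \<and> \<Union> C = X"

end

theory Submission
  imports Defs
begin

lemma G_edge_cases: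
  assumes "f \<in> G_edges k X F"
  shows "(\<exists>x\<in>X. f = {B (Itm x), B (Itm' x)}) \<or>
         (\<exists>e \<in> (base_edges k X F - item_edges X) \<union> P_edges F. f \<subseteq> B ` e \<union> range (Ext e))"
  using assms unfolding G_edges_def gadget_edges_def item_edges_def
  by (auto 0 4)

lemma L1:
  assumes "{B (Itm x), w} \<in> G_edges k X F" "w \<noteq> B (Itm x)"
  shows "w = B (Itm' x) \<or> (\<exists>S i. S \<in> F \<and> x \<in> S \<and> i < k - 2 \<and>
           (w = B (SV S i) \<or> (\<exists>j. w = Ext {Itm x, SV S i} j)))"
proof -
  from G_edge_cases[OF assms(1)] show ?thesis
  proof
    assume "\<exists>y\<in>X. {B (Itm x), w} = {B (Itm y), B (Itm' y)}"
    then show ?thesis by (auto simp: doubleton_eq_iff)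
  next
    assume "\<exists>e \<in> (base_edges k X F - item_edges X) \<union> P_edges F. {B (Itm x), w} \<subseteq> B ` e \<union> range (Ext e)"
    then obtain e where e: "e \<in> (base_edges k X F - item_edges X) \<union> P_edges F"
      and sub: "{B (Itm x), w} \<subseteq> B ` e \<union> range (Ext e)" by blast
    have ix: "Itm x \<in> e" using sub by auto
    have "\<exists>S i. S \<in> F \<and> x \<in> S \<and> i < k - 2 \<and> e = {Itm x, SV S i}"
      using e ix unfolding base_edges_def set_edges_def incidence_edges_def P_edges_def item_edges_def
      by auto
    then obtain S i where Si: "S \<in> F" "x \<in> S" "i < k - 2" "e = {Itm x, SV S i}" by blast
    then show ?thesis using sub assms(2) by auto
  qed
qed

lemma L1':
  assumes "{B (Itm' x), w} \<in> G_edges k X F" "w \<noteq> B (Itm' x)"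
  shows "w = B (Itm x) \<or> (\<exists>S i. S \<in> F \<and> x \<in> S \<and> i < k - 2 \<and>
           (w = B (SV S i) \<or> (\<exists>j. w = Ext {Itm' x, SV S i} j)))"
proof -
  from G_edge_cases[OF assms(1)] show ?thesis
  proof
    assume "\<exists>y\<in>X. {B (Itm' x), w} = {B (Itm y), B (Itm' y)}"
    then show ?thesis by (auto simp: doubleton_eq_iff)
  next
    assume "\<exists>e \<in> (base_edges k X F - item_edges X) \<union> P_edges F. {B (Itm' x), w} \<subseteq> B ` e \<union> range (Ext e)"
    then obtain e where e: "e \<in> (base_edges k X F - item_edges X) \<union> P_edges F"
      and sub: "{B (Itm' x), w} \<subseteq> B ` e \<union> range (Ext e)" by blast
    have ix: "Itm' x \<in> e" using sub by auto
    have "\<exists>S i. S \<in> F \<and> x \<in> S \<and> i < k - 2 \<and> e = {Itm' x, SV S i}"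
      using e ix unfolding base_edges_def set_edges_def incidence_edges_def P_edges_def item_edges_def
      by auto
    then obtain S i where Si: "S \<in> F" "x \<in> S" "i < k - 2" "e = {Itm' x, SV S i}" by blast
    then show ?thesis using sub assms(2) by auto
  qed
qed

lemma L2:
  assumes "{B (Itm x), w} \<in> G_edges k X F" "{B (Itm' x), w} \<in> G_edges k X F"
    "w \<noteq> B (Itm x)" "w \<noteq> B (Itm' x)"
  shows "\<exists>S i. S \<in> F \<and> x \<in> S \<and> i < k - 2 \<and> w = B (SV S i)"
  using L1[OF assms(1,3)] L1'[OF assms(2,4)] assms(3,4) by (auto simp: doubleton_eq_iff)

lemma L3:
  assumes "{B (SV S i), B (SV T j)} \<in> G_edges k X F" "SV S i \<noteq> SV T j"
  shows "S = T \<and> {i, j} \<noteq> {0, 1}"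
proof -
  from G_edge_cases[OF assms(1)] show ?thesis
  proof
    assume "\<exists>y\<in>X. {B (SV S i), B (SV T j)} = {B (Itm y), B (Itm' y)}"
    then show ?thesis by (auto simp: doubleton_eq_iff)
  next
    assume "\<exists>e \<in> (base_edges k X F - item_edges X) \<union> P_edges F. {B (SV S i), B (SV T j)} \<subseteq> B ` e \<union> range (Ext e)"
    then obtain e where e: "e \<in> (base_edges k X F - item_edges X) \<union> P_edges F"
      and sub: "{B (SV S i), B (SV T j)} \<subseteq> B ` e \<union> range (Ext e)" by blast
    have ix: "SV S i \<in> e" "SV T j \<in> e" using sub by auto
    have "\<exists>S' a b. e = {SV S' a, SV S' b} \<and> {a, b} \<noteq> {0, 1}"
    proof -
      have "e \<in> set_edges k F \<or> e \<in> incidence_edges k F \<or> e \<in> P_edges F"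
        using e unfolding base_edges_def by blast
      moreover have "e \<notin> incidence_edges k F"
      proof
        assume "e \<in> incidence_edges k F"
        then obtain y U a where "e = {Itm y, SV U a} \<or> e = {Itm' y, SV U a}"
          unfolding incidence_edges_def by blast
        then show False using ix assms(2) by auto
      qed
      moreover have "e \<notin> P_edges F"
      proof
        assume "e \<in> P_edges F"
        then obtain U where "e = {SV U 0, PV}" unfolding P_edges_def by blast
        then show False using ix assms(2) by auto
      qed
      ultimately have "e \<in> set_edges k F" by blast
      then show ?thesis unfolding set_edges_def
        by (elim CollectE exE conjE) (intro exI conjI, assumption+)
    qed
    then obtain S' a b where ab: "e = {SV S' a, SV S' b}" "{a, b} \<noteq> {0::nat, 1}"
      by (elim exE conjE) (rule that; assumption)
    then have "{SV S i, SV T j} = {SV S' a, SV S' b}" using ix assms(2) by auto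
    then have "{i,j} = {a,b}" "S = S'" "T = S'" by (auto simp: doubleton_eq_iff)
    then show ?thesis using ab(2) by simp
  qed
qed

theorem lemma4:
  fixes k :: nat and X :: "'a set" and F :: "'a set set" and t :: nat
    and E' :: "'a vtx set set"
  assumes "k \<ge> 4"
    and "set_cover_instance X F"
    and "good_completion_set k X F E'"
  shows "is_set_cover X F {S \<in> F. {B (SV S 0), B (SV S 1)} \<in> E'}
         \<and> card {S \<in> F. {B (SV S 0), B (SV S 1)} \<in> E'} = card E'"
proof -
  let ?C = "{S \<in> F. {B (SV S 0), B (SV S 1)} \<in> E'}"
  let ?g = "\<lambda>S. {B (SV S 0), B (SV (S::'a set) 1)}"
  have Esub: "E' \<subseteq> ?g ` F" using assms(3) unfolding good_completion_set_def by auto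
  have cov: "has_k1_cover k (G_edges k X F \<union> E')"
    using assms(3) unfolding good_completion_set_def k_completion_set_def by auto
  have inj: "inj ?g" by (rule injI) (auto simp: doubleton_eq_iff)
  have EC: "E' = ?g ` ?C" using Esub by auto
  have ci: "card (?g ` ?C) = card ?C"
    by (rule card_image) (rule inj_on_subset[OF inj subset_UNIV])
  have card: "card ?C = card E'"
    using arg_cong[OF EC, of card] ci by simp
  have Eshape: "\<And>f. f \<in> E' \<Longrightarrow> \<exists>S. f = ?g S" using Esub by auto
  have "x \<in> \<Union> ?C" if x: "x \<in> X" for x
  proof -
    have "{B (Itm x), B (Itm' x)} \<in> G_edges k X F"
    proof -
      have "{Itm x, Itm' x} \<in> item_edges X" using x unfolding item_edges_def by blast
      then have "B ` {Itm x, Itm' x} \<in> image B ` item_edges X" by blast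
      then show ?thesis unfolding G_edges_def by simp
    qed
    then obtain K where K: "{B (Itm x), B (Itm' x)} \<subseteq> K" "finite K" "card K = k"
      "is_clique (G_edges k X F \<union> E') K"
      using cov unfolding has_k1_cover_def by blast
    define K' where "K' = K - {B (Itm x), B (Itm' x)}"
    have cK': "card K' = k - 2" unfolding K'_def using K
      by (subst card_Diff_subset) auto
    have fK': "finite K'" unfolding K'_def using K by auto
    have adj: "\<And>u v. u \<in> K \<Longrightarrow> v \<in> K \<Longrightarrow> u \<noteq> v \<Longrightarrow> {u, v} \<in> G_edges k X F \<union> E'"
      using K(4) unfolding is_clique_def by blast
    have shape: "\<exists>S i. S \<in> F \<and> x \<in> S \<and> i < k - 2 \<and> w = B (SV S i)" if w: "w \<in> K'" for w
    proof -
      have w1: "w \<in> K" "w \<noteq> B (Itm x)" "w \<noteq> B (Itm' x)" using w unfolding K'_def by auto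
      have "{B (Itm x), w} \<in> G_edges k X F \<union> E'" using adj[of "B (Itm x)" w] w1 K(1) by auto
      moreover have "{B (Itm x), w} \<notin> E'" using Eshape by (fastforce simp: doubleton_eq_iff)
      ultimately have a1: "{B (Itm x), w} \<in> G_edges k X F" by blast
      have "{B (Itm' x), w} \<in> G_edges k X F \<union> E'" using adj[of "B (Itm' x)" w] w1 K(1) by auto
      moreover have "{B (Itm' x), w} \<notin> E'" using Eshape by (fastforce simp: doubleton_eq_iff)
      ultimately have a2: "{B (Itm' x), w} \<in> G_edges k X F" by blast
      show ?thesis using L2[OF a1 a2 w1(2,3)] .
    qed
    have "K' \<noteq> {}" using cK' assms(1) by auto
    then obtain w0 where w0: "w0 \<in> K'" by blast
    then obtain S0 i0 where S0: "S0 \<in> F" "x \<in> S0" "i0 < k - 2" "w0 = B (SV S0 i0)"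
      using shape by blast
    have KsubA: "K' \<subseteq> (\<lambda>i. B (SV S0 i)) ` {..<k-2}"
    proof
      fix w assume w: "w \<in> K'"
      then obtain T j where T: "T \<in> F" "j < k - 2" "w = B (SV T j)" using shape by blast
      have "T = S0"
      proof (cases "w = w0")
        case True then show ?thesis using T S0 by auto
      next
        case False
        then have "{w0, w} \<in> G_edges k X F \<union> E'" using adj w w0 unfolding K'_def by auto
        then show ?thesis
        proof
          assume "{w0, w} \<in> G_edges k X F"
          then show ?thesis using L3[of S0 i0 T j] S0 T False by auto
        next
          assume "{w0, w} \<in> E'"
          then obtain U where "{w0, w} = ?g U" using Eshape by blast
          then show ?thesis using S0 T by (auto simp: doubleton_eq_iff)
        qed
      qed
      then show "w \<in> (\<lambda>i. B (SV S0 i)) ` {..<k-2}" using T by auto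
    qed
    have cA: "card ((\<lambda>i. B (SV S0 i)) ` {..<k-2}) = k - 2"
      by (subst card_image) (auto intro: inj_onI)
    have KA: "K' = (\<lambda>i. B (SV S0 i)) ` {..<k-2}"
      using KsubA cA cK' by (intro card_subset_eq) auto
    have in0: "B (SV S0 0) \<in> K" and in1: "B (SV S0 1) \<in> K"
      using KA assms(1) unfolding K'_def by auto
    have "{B (SV S0 0), B (SV S0 1)} \<in> G_edges k X F \<union> E'" using adj[OF in0 in1] by auto
    moreover have "{B (SV S0 0), B (SV S0 1)} \<notin> G_edges k X F"
      using L3[of S0 0 S0 1] by auto
    ultimately have "?g S0 \<in> E'" by blast
    then show ?thesis using S0 by auto
  qed
  moreover have "\<Union> ?C \<subseteq> X" using assms(2) unfolding set_cover_instance_def by auto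
  ultimately show ?thesis using card unfolding is_set_cover_def by auto
qed

end
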